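(* The ai-semiring $S_{(4,435)}$ is nonfinitely based.
   Context: An ai-semiring is an algebra $(S,+,\cdot)$ with $(S,+)$ a semilattice, $(S,\cdot)$ a semigroup, and both distributive laws. An algebra is finitely based if some finite set of identities derives all its identities. $S_{(4,435)}$ has carrier $\{1,2,3,4\}$; addition: $x+x=x$, $2+x=x$, $1+x=1$ for all $x$, $3+4=1$; multiplication (row $a$, column $b$ gives $a\cdot b$): row $1$: $1,2,1,1$; row $2$: $2,2,2,2$; row $3$: $1,2,1,3$; row $4$: $1,2,3,4$. *)

theory Defs
  imports Main
begin

datatype trm = Var nat | Plus trm trm | Times trm trm

fun eval :: "('a \<Rightarrow> 'a \<Rightarrow> 'a) \<Rightarrow> ('a \<Rightarrow> 'a \<Rightarrow> 'a) \<Rightarrow> (nat \<Rightarrow> 'a) \<Rightarrow> trm \<Rightarrow> 'a" where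
  "eval pl tm v (Var n) = v n"
| "eval pl tm v (Plus s t) = pl (eval pl tm v s) (eval pl tm v t)"
| "eval pl tm v (Times s t) = tm (eval pl tm v s) (eval pl tm v t)"

definition satisfies :: "('a \<Rightarrow> 'a \<Rightarrow> 'a) \<Rightarrow> ('a \<Rightarrow> 'a \<Rightarrow> 'a) \<Rightarrow> trm \<times> trm \<Rightarrow> bool" where
  "satisfies pl tm e \<longleftrightarrow> (\<forall>v. eval pl tm v (fst e) = eval pl tm v (snd e))"

definition identities :: "('a \<Rightarrow> 'a \<Rightarrow> 'a) \<Rightarrow> ('a \<Rightarrow> 'a \<Rightarrow> 'a) \<Rightarrow> (trm \<times> trm) set" where
  "identities pl tm = {e. satisfies pl tm e}"

fun subst :: "(nat \<Rightarrow> trm) \<Rightarrow> trm \<Rightarrow> trm" where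
  "subst \<sigma> (Var n) = \<sigma> n"
| "subst \<sigma> (Plus s t) = Plus (subst \<sigma> s) (subst \<sigma> t)"
| "subst \<sigma> (Times s t) = Times (subst \<sigma> s) (subst \<sigma> t)"

inductive derives :: "(trm \<times> trm) set \<Rightarrow> trm \<Rightarrow> trm \<Rightarrow> bool" for \<Sigma> where
  ax: "(s, t) \<in> \<Sigma> \<Longrightarrow> derives \<Sigma> s t"
| refl: "derives \<Sigma> t t"
| sym: "derives \<Sigma> s t \<Longrightarrow> derives \<Sigma> t s"
| trans: "derives \<Sigma> s t \<Longrightarrow> derives \<Sigma> t u \<Longrightarrow> derives \<Sigma> s u"
| subst: "derives \<Sigma> s t \<Longrightarrow> derives \<Sigma> (subst \<sigma> s) (subst \<sigma> t)"
| cong_plus: "derives \<Sigma> s1 t1 \<Longrightarrow> derives \<Sigma> s2 t2 \<Longrightarrow> derives \<Sigma> (Plus s1 s2) (Plus t1 t2)"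
| cong_times: "derives \<Sigma> s1 t1 \<Longrightarrow> derives \<Sigma> s2 t2 \<Longrightarrow> derives \<Sigma> (Times s1 s2) (Times t1 t2)"

definition finitely_based :: "('a \<Rightarrow> 'a \<Rightarrow> 'a) \<Rightarrow> ('a \<Rightarrow> 'a \<Rightarrow> 'a) \<Rightarrow> bool" where
  "finitely_based pl tm \<longleftrightarrow>
     (\<exists>\<Sigma>. finite \<Sigma> \<and> \<Sigma> \<subseteq> identities pl tm \<and>
          (\<forall>e \<in> identities pl tm. derives \<Sigma> (fst e) (snd e)))"

datatype s4 = E1 | E2 | E3 | E4

fun s4_add :: "s4 \<Rightarrow> s4 \<Rightarrow> s4" where
  "s4_add E2 y = y"
| "s4_add x E2 = x"
| "s4_add E1 y = E1"
| "s4_add x E1 = E1"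
| "s4_add E3 E3 = E3"
| "s4_add E4 E4 = E4"
| "s4_add E3 E4 = E1"
| "s4_add E4 E3 = E1"

fun s4_mul :: "s4 \<Rightarrow> s4 \<Rightarrow> s4" where
  "s4_mul E1 E1 = E1" | "s4_mul E1 E2 = E2" | "s4_mul E1 E3 = E1" | "s4_mul E1 E4 = E1"
| "s4_mul E2 y = E2"
| "s4_mul E3 E1 = E1" | "s4_mul E3 E2 = E2" | "s4_mul E3 E3 = E1" | "s4_mul E3 E4 = E3"
| "s4_mul E4 E1 = E1" | "s4_mul E4 E2 = E2" | "s4_mul E4 E3 = E3" | "s4_mul E4 E4 = E4"

end

theory Submission
  imports Defs "HOL-Library.Multiset"
begin
instantiation s4 :: comm_monoid_mult
begin
definition times_s4 :: "s4 \<Rightarrow> s4 \<Rightarrow> s4" where "times_s4 = s4_mul"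
definition one_s4 :: s4 where "one_s4 = E4"
instance
proof
  fix a b c :: s4
  show "a * b * c = a * (b * c)" unfolding times_s4_def
    by (cases a; cases b; cases c) auto
  show "a * b = b * a" unfolding times_s4_def by (cases a; cases b) auto
  show "1 * a = a" unfolding times_s4_def one_s4_def by (cases a) auto
qed
end

lemma mul_simps[simp]:
  "E2 * x = E2" "x * E2 = E2" "E4 * x = x" "x * E4 = x"
  "E1 * E1 = E1" "E1 * E3 = E1" "E3 * E1 = E1" "E3 * E3 = E1"
  by (cases x; simp add: times_s4_def)+

definition SS :: "s4 set \<Rightarrow> s4" where
  "SS A = (if E1 \<in> A \<or> (E3 \<in> A \<and> E4 \<in> A) then E1 else if E3 \<in> A then E3
           else if E4 \<in> A then E4 else E2)"

lemma SS_Un: "SS (A \<union> B) = s4_add (SS A) (SS B)"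
  unfolding SS_def by auto

lemma ex_s4: "(\<exists>x::s4. P x) \<longleftrightarrow> P E1 \<or> P E2 \<or> P E3 \<or> P E4"
  by (metis s4.exhaust)

lemma SS_mul:
  assumes "A \<noteq> {}" "B \<noteq> {}"
  shows "SS ((\<lambda>(a,b). a * b) ` (A \<times> B)) = SS A * SS B"
proof -
  have mem: "v \<in> (\<lambda>(a,b). a * b) ` (A \<times> B) \<longleftrightarrow> (\<exists>a b. a \<in> A \<and> b \<in> B \<and> v = a * b)" for v
    by auto
  have ne: "E1 \<in> A \<or> E2 \<in> A \<or> E3 \<in> A \<or> E4 \<in> A" "E1 \<in> B \<or> E2 \<in> B \<or> E3 \<in> B \<or> E4 \<in> B"
    using assms by (metis all_not_in_conv s4.exhaust)+
  show ?thesis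
    unfolding SS_def mem ex_s4
    using ne by (auto simp: times_s4_def)
qed

definition pmul :: "nat multiset set \<Rightarrow> nat multiset set \<Rightarrow> nat multiset set" where
  "pmul P Q = (\<lambda>(a,b). a + b) ` (P \<times> Q)"

lemma pmul_iff: "m \<in> pmul P Q \<longleftrightarrow> (\<exists>a b. a \<in> P \<and> b \<in> Q \<and> m = a + b)"
  unfolding pmul_def by auto

fun Pol :: "trm \<Rightarrow> (nat \<Rightarrow> nat multiset set) \<Rightarrow> nat multiset set" where
  "Pol (Var i) \<pi> = \<pi> i"
| "Pol (Plus s t) \<pi> = Pol s \<pi> \<union> Pol t \<pi>"
| "Pol (Times s t) \<pi> = pmul (Pol s \<pi>) (Pol t \<pi>)"

definition poly :: "trm \<Rightarrow> nat multiset set" where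
  "poly t = Pol t (\<lambda>i. {{#i#}})"

lemma poly_simps[simp]:
  "poly (Var i) = {{#i#}}"
  "poly (Plus s t) = poly s \<union> poly t"
  "poly (Times s t) = pmul (poly s) (poly t)"
  by (simp_all add: poly_def)

lemma poly_ne: "poly t \<noteq> {}"
  by (induction t) (auto simp: pmul_def)

lemma poly_mono_ne: "M \<in> poly t \<Longrightarrow> M \<noteq> {#}"
  by (induction t arbitrary: M) (auto simp: pmul_iff)

fun vars :: "trm \<Rightarrow> nat set" where
  "vars (Var i) = {i}"
| "vars (Plus s t) = vars s \<union> vars t"
| "vars (Times s t) = vars s \<union> vars t"

lemma finite_vars: "finite (vars t)"
  by (induction t) auto

lemma poly_vars: "M \<in> poly t \<Longrightarrow> set_mset M \<subseteq> vars t"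
  by (induction t arbitrary: M) (fastforce simp: pmul_iff)+

definition mv :: "(nat \<Rightarrow> s4) \<Rightarrow> nat multiset \<Rightarrow> s4" where
  "mv \<psi> M = prod_mset (image_mset \<psi> M)"

lemma mv_single[simp]: "mv \<psi> {#i#} = \<psi> i"
  by (simp add: mv_def)

lemma mv_plus[simp]: "mv \<psi> (A + B) = mv \<psi> A * mv \<psi> B"
  by (simp add: mv_def)

lemma eval_SS: "eval s4_add s4_mul \<psi> t = SS (mv \<psi> ` poly t)"
proof (induction t)
  case (Var x)
  show ?case by (cases "\<psi> x") (auto simp: SS_def)
next
  case (Plus s t)
  then show ?case by (simp add: image_Un SS_Un)
next
  case (Times s t)
  have "mv \<psi> ` pmul (poly s) (poly t) = (\<lambda>(a,b). a * b) ` (mv \<psi> ` poly s \<times> mv \<psi> ` poly t)"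
    unfolding pmul_def by (auto simp: image_iff; blast)
  then show ?case using Times poly_ne
    by (simp add: SS_mul times_s4_def[symmetric])
qed

lemma mv_add[simp]: "mv \<psi> (add_mset x M) = \<psi> x * mv \<psi> M"
  by (simp add: mv_def)

lemma mv_empty[simp]: "mv \<psi> {#} = E4"
  by (simp add: mv_def one_s4_def)

lemma mv_E2: "x \<in># M \<Longrightarrow> \<psi> x = E2 \<Longrightarrow> mv \<psi> M = E2"
  by (metis mul_simps(1) mv_add multi_member_split)

lemma mv_not2: "(\<forall>y\<in>#M. \<psi> y \<noteq> E2) \<Longrightarrow> mv \<psi> M \<noteq> E2"
proof (induction M)
  case empty then show ?case by simp
next
  case (add x M)
  then have "\<psi> x \<noteq> E2" "mv \<psi> M \<noteq> E2" by auto
  then show ?case by (cases "\<psi> x"; cases "mv \<psi> M") (auto simp: times_s4_def)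
qed

lemma mv_E1: "x \<in># M \<Longrightarrow> \<psi> x = E1 \<Longrightarrow> (\<forall>y\<in>#M. \<psi> y \<noteq> E2) \<Longrightarrow> mv \<psi> M = E1"
proof -
  assume a: "x \<in># M" "\<psi> x = E1" "\<forall>y\<in>#M. \<psi> y \<noteq> E2"
  obtain M' where M: "M = add_mset x M'" using a(1) by (metis multi_member_split)
  have "mv \<psi> M' \<noteq> E2" using a(3) M mv_not2[of M' \<psi>] by auto
  then show ?thesis using M a(2) by (cases "mv \<psi> M'") (auto simp: times_s4_def)
qed

lemma mv_34: "(\<forall>y\<in>#M. \<psi> y = E3 \<or> \<psi> y = E4) \<Longrightarrow>
   mv \<psi> M = (if size {#y \<in># M. \<psi> y = E3#} = 0 then E4
              else if size {#y \<in># M. \<psi> y = E3#} = 1 then E3 else E1)"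
proof (induction M)
  case empty then show ?case by simp
next
  case (add x M)
  then have IH: "mv \<psi> M = (if size {#y \<in># M. \<psi> y = E3#} = 0 then E4
              else if size {#y \<in># M. \<psi> y = E3#} = 1 then E3 else E1)" by auto
  have "\<psi> x = E3 \<or> \<psi> x = E4" using add by auto
  then show ?case using IH by (auto simp: times_s4_def)
qed

lemma mv_E4: "(\<forall>y\<in>#M. \<psi> y = E4) \<Longrightarrow> mv \<psi> M = E4"
  by (induction M) auto

definition Mon :: "(nat \<Rightarrow> nat multiset set) \<Rightarrow> nat multiset \<Rightarrow> nat multiset set" where
  "Mon \<pi> M = fold_mset (\<lambda>x S. pmul (\<pi> x) S) {{#}} M"

lemma pmul_lc: "pmul A (pmul B C) = pmul B (pmul A C)"
  unfolding pmul_iff set_eq_iff by (metis add.left_commute)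

lemma pmul_assoc: "pmul (pmul A B) C = pmul A (pmul B C)"
  unfolding pmul_iff set_eq_iff by (metis add.assoc)

lemma pmul_unit: "pmul {{#}} A = A"
  unfolding pmul_iff set_eq_iff by simp

interpretation Moncf: comp_fun_commute "\<lambda>x S. pmul (\<pi> x) S"
  by unfold_locales (auto simp: fun_eq_iff pmul_lc)

lemma Mon_empty[simp]: "Mon \<pi> {#} = {{#}}"
  by (simp add: Mon_def)

lemma Mon_add[simp]: "Mon \<pi> (add_mset x M) = pmul (\<pi> x) (Mon \<pi> M)"
  by (simp add: Mon_def)

lemma Mon_union: "Mon \<pi> (M + N) = pmul (Mon \<pi> M) (Mon \<pi> N)"
  by (induction M) (simp_all add: pmul_unit pmul_assoc)

lemma pmul_unit2: "pmul A {{#}} = A"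
  unfolding pmul_iff set_eq_iff by simp

lemma Mon_single[simp]: "Mon \<pi> {#x#} = \<pi> x"
  by (metis Mon_add Mon_empty pmul_unit2)

lemma Pol_Mon: "Pol t \<pi> = (\<Union>M\<in>poly t. Mon \<pi> M)"
proof (induction t)
  case (Var x) then show ?case by (simp add: pmul_unit2)
next
  case (Plus s t) then show ?case by auto
next
  case (Times s t)
  show ?case
  proof (rule set_eqI)
    fix m
    show "m \<in> Pol (Times s t) \<pi> \<longleftrightarrow> m \<in> (\<Union>M\<in>poly (Times s t). Mon \<pi> M)"
    proof
      assume "m \<in> Pol (Times s t) \<pi>"
      then obtain a b M N where "M \<in> poly s" "a \<in> Mon \<pi> M" "N \<in> poly t" "b \<in> Mon \<pi> N" "m = a + b"
        using Times by (auto simp: pmul_iff)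
      moreover have "M + N \<in> poly (Times s t)" using calculation by (auto simp: pmul_iff)
      moreover have "a + b \<in> Mon \<pi> (M + N)" using calculation by (auto simp: Mon_union pmul_iff)
      ultimately show "m \<in> (\<Union>M\<in>poly (Times s t). Mon \<pi> M)" by blast
    next
      assume "m \<in> (\<Union>M\<in>poly (Times s t). Mon \<pi> M)"
      then obtain M N where MN: "M \<in> poly s" "N \<in> poly t" "m \<in> Mon \<pi> (M + N)"
        by (auto simp: pmul_iff)
      then obtain a b where "a \<in> Mon \<pi> M" "b \<in> Mon \<pi> N" "m = a + b"
        by (auto simp: Mon_union pmul_iff)
      then show "m \<in> Pol (Times s t) \<pi>" using MN Times by (auto simp: pmul_iff)
    qed
  qed
qed

definition good :: "(nat \<Rightarrow> nat multiset set) \<Rightarrow> bool" where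
  "good \<pi> \<longleftrightarrow> (\<forall>x. \<pi> x \<noteq> {} \<and> (\<forall>m\<in>\<pi> x. m \<noteq> {#}))"

lemma Mon_ne: "good \<pi> \<Longrightarrow> Mon \<pi> M \<noteq> {}"
  by (induction M) (auto simp: good_def pmul_def)

lemma Mon_size: "good \<pi> \<Longrightarrow> m \<in> Mon \<pi> M \<Longrightarrow> size M \<le> size m"
proof (induction M arbitrary: m)
  case empty then show ?case by simp
next
  case (add x M)
  then obtain a b where ab: "a \<in> \<pi> x" "b \<in> Mon \<pi> M" "m = a + b" by (auto simp: pmul_iff)
  then have "a \<noteq> {#}" using add.prems(1) by (auto simp: good_def)
  then have "size a \<ge> 1" by (simp add: Suc_leI nonempty_has_size)
  then show ?case using add.IH[OF add.prems(1) ab(2)] ab(3) by simp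
qed

lemma Pol_ne: "good \<pi> \<Longrightarrow> Pol t \<pi> \<noteq> {}"
  by (induction t) (auto simp: good_def pmul_def)

lemma Pol_mono_ne: "good \<pi> \<Longrightarrow> m \<in> Pol t \<pi> \<Longrightarrow> m \<noteq> {#}"
  by (induction t arbitrary: m) (auto simp: good_def pmul_iff)

lemma eval_subst: "eval pl tm \<phi> (subst \<sigma> t) = eval pl tm (\<lambda>i. eval pl tm \<phi> (\<sigma> i)) t"
  by (induction t) auto

lemma eval_closed:
  assumes "\<forall>x y. x \<in> D \<longrightarrow> y \<in> D \<longrightarrow> pl x y \<in> D \<and> tm x y \<in> D" "\<forall>i. \<phi> i \<in> D"
  shows "eval pl tm \<phi> t \<in> D"
  using assms by (induction t) auto

lemma derives_sound:
  assumes "derives \<Sigma> s t"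
    and cl: "\<forall>x y. x \<in> D \<longrightarrow> y \<in> D \<longrightarrow> pl x y \<in> D \<and> tm x y \<in> D"
    and ax: "\<forall>e\<in>\<Sigma>. \<forall>\<phi>. (\<forall>i. \<phi> i \<in> D) \<longrightarrow> eval pl tm \<phi> (fst e) = eval pl tm \<phi> (snd e)"
  shows "\<forall>\<phi>. (\<forall>i. \<phi> i \<in> D) \<longrightarrow> eval pl tm \<phi> s = eval pl tm \<phi> t"
  using assms(1)
proof (induction rule: derives.induct)
  case (ax s t) then show ?case using assms(3) by fastforce
next
  case (refl t) then show ?case by simp
next
  case (sym s t) then show ?case by simp
next
  case (trans s t u) then show ?case by simp
next
  case (subst s t \<sigma>)
  show ?case
  proof (intro allI impI)
    fix \<phi> :: "nat \<Rightarrow> 'a" assume h: "\<forall>i. \<phi> i \<in> D"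
    have "\<forall>i. eval pl tm \<phi> (\<sigma> i) \<in> D" using eval_closed[OF cl h] by blast
    then show "eval pl tm \<phi> (Defs.subst \<sigma> s) = eval pl tm \<phi> (Defs.subst \<sigma> t)"
      using subst.IH by (simp add: eval_subst)
  qed
next
  case (cong_plus s1 t1 s2 t2) then show ?case by simp
next
  case (cong_times s1 t1 s2 t2) then show ?case by simp
qed

definition Eset :: "nat \<Rightarrow> nat multiset set" where
  "Eset n = (\<lambda>i. {#i, Suc i mod n#}) ` {..<n}"

definition V1 :: "nat \<Rightarrow> nat multiset set" where
  "V1 n = (\<lambda>i. {#i#}) ` {..<n}"

definition bet :: "nat \<Rightarrow> nat multiset set \<Rightarrow> nat multiset set option" where
  "bet n P = (if P \<subseteq> Eset n \<or> P \<subseteq> V1 n then Some P else None)"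

definition plB :: "nat \<Rightarrow> nat multiset set option \<Rightarrow> nat multiset set option \<Rightarrow> nat multiset set option" where
  "plB n x y = (case x of None \<Rightarrow> None | Some P \<Rightarrow> (case y of None \<Rightarrow> None | Some Q \<Rightarrow> bet n (P \<union> Q)))"

definition tmB :: "nat \<Rightarrow> nat multiset set option \<Rightarrow> nat multiset set option \<Rightarrow> nat multiset set option" where
  "tmB n x y = (case x of None \<Rightarrow> None | Some P \<Rightarrow> (case y of None \<Rightarrow> None | Some Q \<Rightarrow> bet n (pmul P Q)))"

definition DD :: "nat \<Rightarrow> nat multiset set option set" where
  "DD n = {None} \<union> Some ` {P. P \<noteq> {} \<and> (P \<subseteq> Eset n \<or> P \<subseteq> V1 n)}"

lemma Eset_size: "m \<in> Eset n \<Longrightarrow> size m = 2"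
  by (auto simp: Eset_def)

lemma V1_size: "m \<in> V1 n \<Longrightarrow> size m = 1"
  by (auto simp: V1_def)

lemma Eset_elems: "m \<in> Eset n \<Longrightarrow> x \<in># m \<Longrightarrow> x < n"
  by (auto simp: Eset_def)

lemma bet_Un: "bet n (A \<union> B) = plB n (bet n A) (bet n B)"
  unfolding plB_def bet_def by auto

lemma size1_V1:
  assumes "a + b \<in> Eset n" "a \<noteq> {#}" "b \<noteq> {#}"
  shows "a \<in> V1 n"
proof -
  have "size (a + b) = 2" using assms(1) Eset_size by blast
  moreover have "size a \<ge> 1" "size b \<ge> 1" using assms(2,3) by (auto simp: Suc_leI nonempty_has_size)
  ultimately have "size a = 1" by simp
  then obtain i where i: "a = {#i#}" using size_1_singleton_mset by blast
  have "i < n" using Eset_elems[OF assms(1), of i] i by simp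
  then show ?thesis using i by (auto simp: V1_def)
qed

lemma bet_mul:
  assumes "A \<noteq> {}" "B \<noteq> {}" "\<forall>m\<in>A. m \<noteq> {#}" "\<forall>m\<in>B. m \<noteq> {#}"
  shows "bet n (pmul A B) = tmB n (bet n A) (bet n B)"
proof -
  have notV1: "\<not> pmul A B \<subseteq> V1 n"
  proof
    assume h: "pmul A B \<subseteq> V1 n"
    obtain a b where ab: "a \<in> A" "b \<in> B" using assms(1,2) by blast
    then have "a + b \<in> pmul A B" by (auto simp: pmul_iff)
    then have "a + b \<in> V1 n" using h by blast
    then have "size (a + b) = 1" by (rule V1_size)
    moreover have "size a \<ge> 1" "size b \<ge> 1" using ab assms(3,4) by (auto simp: Suc_leI nonempty_has_size)
    ultimately show False by simp
  qed
  have EA: "pmul A B \<subseteq> Eset n \<Longrightarrow> A \<subseteq> V1 n"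
  proof
    fix a assume h: "pmul A B \<subseteq> Eset n" "a \<in> A"
    obtain b where b: "b \<in> B" using assms(2) by blast
    then have "a + b \<in> pmul A B" using h by (auto simp: pmul_iff)
    then have "a + b \<in> Eset n" using h by blast
    then show "a \<in> V1 n" using size1_V1 assms(3,4) h(2) b by blast
  qed
  have EB: "pmul A B \<subseteq> Eset n \<Longrightarrow> B \<subseteq> V1 n"
  proof
    fix b assume h: "pmul A B \<subseteq> Eset n" "b \<in> B"
    obtain a where a: "a \<in> A" using assms(1) by blast
    then have "a + b \<in> pmul A B" using h by (auto simp: pmul_iff)
    then have "b + a \<in> Eset n" using h by (auto simp: add.commute)
    then show "b \<in> V1 n" using size1_V1 assms(3,4) h(2) a by blast
  qed
  show ?thesis
    unfolding tmB_def using notV1 EA EB by (auto simp: bet_def)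
qed

lemma eval_B:
  assumes "good \<pi>"
  shows "eval (plB n) (tmB n) (\<lambda>i. bet n (\<pi> i)) t = bet n (Pol t \<pi>)"
proof (induction t)
  case (Var x) then show ?case by simp
next
  case (Plus s t) then show ?case by (simp add: bet_Un)
next
  case (Times s t) then show ?case
    using bet_mul[of "Pol s \<pi>" "Pol t \<pi>" n] Pol_ne[OF assms] Pol_mono_ne[OF assms] by simp
qed

lemma bet_DD: "P \<noteq> {} \<Longrightarrow> bet n P \<in> DD n"
  by (auto simp: DD_def bet_def)

lemma DD_closed: "\<forall>x y. x \<in> DD n \<longrightarrow> y \<in> DD n \<longrightarrow> plB n x y \<in> DD n \<and> tmB n x y \<in> DD n"
proof (intro allI impI conjI)
  fix x y assume h: "x \<in> DD n" "y \<in> DD n"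
  show "plB n x y \<in> DD n"
  proof (cases x; cases y)
    fix P Q assume "x = Some P" "y = Some Q"
    then have "P \<noteq> {}" using h by (auto simp: DD_def)
    then show ?thesis using \<open>x = Some P\<close> \<open>y = Some Q\<close> bet_DD[of "P \<union> Q" n] by (simp add: plB_def)
  qed (auto simp: plB_def DD_def)
  show "tmB n x y \<in> DD n"
  proof (cases x; cases y)
    fix P Q assume "x = Some P" "y = Some Q"
    then have "pmul P Q \<noteq> {}" using h by (auto simp: DD_def pmul_def)
    then show ?thesis using \<open>x = Some P\<close> \<open>y = Some Q\<close> bet_DD[of "pmul P Q" n] by (simp add: tmB_def)
  qed (auto simp: tmB_def DD_def)
qed

lemma dbl_eq: "{#a, b#} = {#c, d#} \<longleftrightarrow> (a = c \<and> b = d) \<or> (a = d \<and> b = c)"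
proof
  assume h: "{#a, b#} = {#c, d#}"
  show "(a = c \<and> b = d) \<or> (a = d \<and> b = c)"
  proof (cases "a = c")
    case True then show ?thesis using h by simp
  next
    case False
    have "a \<in># {#c, d#}" using h[symmetric] by simp
    then have "a = d" using False by simp
    then show ?thesis using h by (simp add: add_mset_commute)
  qed
qed (auto simp: add_mset_commute)

lemma size2_dbl: "size L = 2 \<Longrightarrow> \<exists>a b. L = {#a, b#}"
proof -
  assume "size L = 2"
  then have "size L = Suc 1" by simp
  then obtain a N where "L = add_mset a N" using size_eq_Suc_imp_eq_union by blast
  moreover have "size N = 1" using calculation \<open>size L = Suc 1\<close> by simp
  moreover obtain b where "N = {#b#}" using size_1_singleton_mset calculation(2) by blast
  ultimately show ?thesis by blast
qed

lemma SS_E1: "E1 \<in> A \<Longrightarrow> SS A = E1" by (simp add: SS_def)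
lemma SS_E2: "SS A = E2 \<longleftrightarrow> A \<subseteq> {E2}"
  unfolding SS_def by (auto; metis s4.exhaust)
lemma SS_24: "A \<subseteq> {E2, E4} \<Longrightarrow> SS A \<noteq> E1" unfolding SS_def by auto
lemma SS_23: "A \<subseteq> {E2, E3} \<Longrightarrow> SS A = E2 \<or> SS A = E3" unfolding SS_def by auto
lemma SS_E3: "SS A = E3 \<Longrightarrow> v \<in> A \<Longrightarrow> v = E2 \<or> v = E3"
  unfolding SS_def by (cases v) (auto split: if_splits)

lemma par_step:
  assumes "a < n" "j < n" "a \<noteq> j" "Suc a mod n \<noteq> j"
  shows "(Suc a mod n + n - j) mod n = Suc ((a + n - j) mod n)"
proof (cases "j \<le> a")
  case True
  have e1: "a + n - j = (a - j) + n" using True by simp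
  have "a - j < n" using assms(1) by simp
  then have p: "(a + n - j) mod n = a - j" unfolding e1 by simp
  show ?thesis
  proof (cases "Suc a = n")
    case True
    then have "Suc a mod n = 0" by simp
    then have "j \<noteq> 0" using assms(4) by simp
    then show ?thesis using p True \<open>j \<le> a\<close> \<open>Suc a mod n = 0\<close> assms by simp
  next
    case False
    then have "Suc a < n" using assms(1) by simp
    then have "Suc a mod n = Suc a" by simp
    moreover have "(Suc a + n - j) mod n = Suc a - j"
    proof -
      have e2: "Suc a + n - j = (Suc a - j) + n" using \<open>j \<le> a\<close> by simp
      have "Suc a - j < n" using \<open>Suc a < n\<close> by simp
      then show ?thesis unfolding e2 by simp
    qed
    ultimately show ?thesis using p \<open>j \<le> a\<close> by (simp add: Suc_diff_le)
  qed
next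
  case False
  then have "Suc a \<le> j" by simp
  then have "Suc a < n" using assms by simp
  then have s: "Suc a mod n = Suc a" by simp
  then have "Suc a < j" using assms(4) \<open>Suc a \<le> j\<close> by simp
  have p: "(a + n - j) mod n = a + n - j" using False assms by simp
  have "(Suc a + n - j) mod n = Suc a + n - j" using \<open>Suc a < j\<close> assms by simp
  then show ?thesis using s p False assms(2) by simp
qed

lemma par_flip:
  assumes "a < n" "j < n" "a \<noteq> j" "Suc a mod n \<noteq> j"
  shows "even ((a + n - j) mod n) \<noteq> even ((Suc a mod n + n - j) mod n)"
  using par_step[OF assms] by simp

declare pmul_unit2[simp]

lemma filter_all: "(\<forall>x\<in>#M. P x) \<Longrightarrow> filter_mset P M = M"
  by (induction M) auto

lemma size_pos: "M \<noteq> {#} \<Longrightarrow> size M \<noteq> 0"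
  by simp

context
  fixes l r :: trm and N n :: nat and \<pi> :: "nat \<Rightarrow> nat multiset set"
  assumes sat: "satisfies s4_add s4_mul (l, r)"
    and vr: "vars r \<subseteq> {..<N}" and Nn: "N < n" and n2: "2 \<le> n" and g: "good \<pi>"
begin

lemma EQ: "SS (mv \<psi> ` poly l) = SS (mv \<psi> ` poly r)"
  using sat by (simp add: satisfies_def eval_SS)

lemma occ:
  assumes M: "M \<in> poly r" "x \<in># M"
  shows "\<exists>L\<in>poly l. x \<in># L"
proof (rule ccontr)
  assume no: "\<not> (\<exists>L\<in>poly l. x \<in># L)"
  define \<psi> where "\<psi> = (\<lambda>z. if z = x then E1 else if z \<in># M then E4 else E2)"
  have "mv \<psi> M = E1" by (rule mv_E1[OF M(2)]) (auto simp: \<psi>_def)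
  then have "E1 \<in> mv \<psi> ` poly r" using M(1) by force
  then have r1: "SS (mv \<psi> ` poly r) = E1" by (rule SS_E1)
  have "mv \<psi> ` poly l \<subseteq> {E2, E4}"
  proof
    fix v assume "v \<in> mv \<psi> ` poly l"
    then obtain L where L: "L \<in> poly l" "v = mv \<psi> L" by auto
    show "v \<in> {E2, E4}"
    proof (cases "\<exists>z\<in>#L. z \<notin># M")
      case True
      then obtain z where z: "z \<in># L" "z \<notin># M" by blast
      then have "z \<noteq> x" using M(2) by auto
      then have "mv \<psi> L = E2" using z by (intro mv_E2[of z]) (auto simp: \<psi>_def)
      then show ?thesis using L by simp
    next
      case False
      have "\<forall>z\<in>#L. \<psi> z = E4" using False no L(1) by (auto simp: \<psi>_def)
      then show ?thesis using L mv_E4 by simp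
    qed
  qed
  then have "SS (mv \<psi> ` poly l) \<noteq> E1" by (rule SS_24)
  then show False using r1 EQ[of \<psi>] by simp
qed

lemma key_V1:
  assumes V: "Pol l \<pi> \<subseteq> V1 n"
  shows "poly r \<subseteq> poly l"
proof -
  have sz: "size L = 1" if L: "L \<in> poly l" for L
  proof -
    obtain m where m: "m \<in> Mon \<pi> L" using Mon_ne[OF g] by blast
    have "m \<in> Pol l \<pi>" using m L by (auto simp: Pol_Mon)
    then have "size m = 1" using V V1_size by blast
    moreover have "size L \<le> size m" using Mon_size[OF g m] .
    moreover have "0 < size L" using poly_mono_ne[OF L] by (simp add: nonempty_has_size)
    ultimately show "size L = 1" by linarith
  qed
  show ?thesis
  proof
    fix M assume M: "M \<in> poly r"
    define \<psi> where "\<psi> = (\<lambda>z. if z \<in># M then E3 else E2)"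
    have l23: "mv \<psi> ` poly l \<subseteq> {E2, E3}"
    proof
      fix v assume "v \<in> mv \<psi> ` poly l"
      then obtain L where L: "L \<in> poly l" "v = mv \<psi> L" by auto
      obtain z where "L = {#z#}" using sz[OF L(1)] size_1_singleton_mset by blast
      then show "v \<in> {E2, E3}" using L by (simp add: \<psi>_def)
    qed
    have "size M = 1"
    proof (rule ccontr)
      assume h: "size M \<noteq> 1"
      have "size M \<noteq> 0" using poly_mono_ne[OF M] by simp
      have all3: "\<forall>z\<in>#M. \<psi> z = E3" by (simp add: \<psi>_def)
      then have "filter_mset (\<lambda>z. \<psi> z = E3) M = M" by (rule filter_all)
      then have "mv \<psi> M = E1" using mv_34[of M \<psi>] all3 h \<open>size M \<noteq> 0\<close> by simp
      then have "E1 \<in> mv \<psi> ` poly r" using M by force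
      then have "SS (mv \<psi> ` poly r) = E1" by (rule SS_E1)
      moreover have "SS (mv \<psi> ` poly l) = E2 \<or> SS (mv \<psi> ` poly l) = E3" using SS_23[OF l23] .
      ultimately show False using EQ[of \<psi>] by simp
    qed
    then obtain y where My: "M = {#y#}" using size_1_singleton_mset by blast
    then obtain L where L: "L \<in> poly l" "y \<in># L" using occ[OF M] by auto
    obtain z where "L = {#z#}" using sz[OF L(1)] size_1_singleton_mset by blast
    then show "M \<in> poly l" using L My by simp
  qed
qed


lemma key_E:
  assumes E: "Pol l \<pi> \<subseteq> Eset n"
  shows "poly r \<subseteq> poly l"
proof -
  have MonE: "Mon \<pi> L \<subseteq> Eset n" if "L \<in> poly l" for L
    using that E by (auto simp: Pol_Mon)
  have sz: "size L = 1 \<or> size L = 2" if L: "L \<in> poly l" for L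
  proof -
    obtain m where m: "m \<in> Mon \<pi> L" using Mon_ne[OF g] by blast
    then have "size m = 2" using MonE[OF L] Eset_size by blast
    moreover have "size L \<le> size m" using Mon_size[OF g m] .
    moreover have "0 < size L" using poly_mono_ne[OF L] by (simp add: nonempty_has_size)
    ultimately show ?thesis by linarith
  qed
  have single: "\<pi> y \<subseteq> Eset n" if "{#y#} \<in> poly l" for y
    using MonE[OF that] by simp
  have Mon2: "Mon \<pi> {#y, z#} = pmul (\<pi> y) (\<pi> z)" for y z
    by (simp add: pmul_unit2)
  have pair: "\<pi> y \<subseteq> V1 n \<and> \<pi> z \<subseteq> V1 n \<and> (\<forall>a\<in>\<pi> y. \<forall>b\<in>\<pi> z. a + b \<in> Eset n)"
    if yz: "{#y, z#} \<in> poly l" for y z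
  proof -
    have ab: "a + b \<in> Eset n" if "a \<in> \<pi> y" "b \<in> \<pi> z" for a b
    proof -
      have "a + b \<in> pmul (\<pi> y) (\<pi> z)" using that by (auto simp: pmul_iff)
      then show ?thesis using MonE[OF yz] by (auto simp: Mon2)
    qed
    have ne: "\<pi> y \<noteq> {}" "\<pi> z \<noteq> {}" "\<forall>m\<in>\<pi> y. m \<noteq> {#}" "\<forall>m\<in>\<pi> z. m \<noteq> {#}"
      using g by (auto simp: good_def)
    have "\<pi> y \<subseteq> V1 n"
    proof
      fix a assume a: "a \<in> \<pi> y"
      obtain b where b: "b \<in> \<pi> z" using ne by blast
      show "a \<in> V1 n" using size1_V1[OF ab[OF a b]] a b ne by blast
    qed
    moreover have "\<pi> z \<subseteq> V1 n"
    proof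
      fix b assume b: "b \<in> \<pi> z"
      obtain a where a: "a \<in> \<pi> y" using ne by blast
      have "b + a \<in> Eset n" using ab[OF a b] by (simp add: add.commute)
      then show "b \<in> V1 n" using size1_V1 a b ne by blast
    qed
    ultimately show ?thesis using ab by blast
  qed
  have nodiag: "{#y, y#} \<notin> poly l" for y
  proof
    assume h: "{#y, y#} \<in> poly l"
    obtain a where a: "a \<in> \<pi> y" using g by (auto simp: good_def)
    have "a \<in> V1 n" using pair[OF h] a by blast
    then obtain i where i: "a = {#i#}" "i < n" by (auto simp: V1_def)
    have "a + a \<in> Eset n" using pair[OF h] a by blast
    then obtain k where k: "k < n" "{#i, i#} = {#k, Suc k mod n#}" using i by (auto simp: Eset_def)
    then have "i = k" "i = Suc k mod n" by (auto simp: dbl_eq)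
    then have "Suc i mod n = i" by simp
    moreover have "i < n" using k(1) \<open>i = k\<close> by simp
    ultimately show False using n2
    proof (cases "Suc i < n")
      case True
      then show False using \<open>Suc i mod n = i\<close> by simp
    next
      case False
      then have "Suc i = n" using \<open>i < n\<close> by simp
      then have "i = 0" using \<open>Suc i mod n = i\<close> by simp
      then show False using \<open>Suc i = n\<close> n2 by simp
    qed
  qed
  define alone where "alone y \<longleftrightarrow> {#y#} \<in> poly l" for y
  define prd where "prd y \<longleftrightarrow> (\<exists>z. {#y, z#} \<in> poly l)" for y
  have prd_both: "prd y \<and> prd z" if "{#y, z#} \<in> poly l" for y z
  proof -
    have "{#z, y#} \<in> poly l" using that by (simp add: add_mset_commute)
    then show ?thesis using that unfolding prd_def by blast
  qed
  have prdV: "\<pi> y \<subseteq> V1 n" if py: "prd y" for y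
  proof -
    obtain z where "{#y, z#} \<in> poly l" using py by (auto simp: prd_def)
    then show ?thesis using pair by blast
  qed
  have excl: "\<not> (alone y \<and> prd y)" for y
  proof
    assume h: "alone y \<and> prd y"
    obtain a where a: "a \<in> \<pi> y" using g by (auto simp: good_def)
    have "a \<in> Eset n" using single h a by (auto simp: alone_def)
    moreover have "a \<in> V1 n" using prdV h a by blast
    ultimately show False using Eset_size V1_size by fastforce
  qed
  have typA: "alone y \<or> prd y" if hM: "M \<in> poly r" "y \<in># M" for M y
  proof -
    obtain L where L: "L \<in> poly l" "y \<in># L" using occ[OF hM] by blast
    show ?thesis
    proof (cases "size L = 1")
      case True
      then obtain a where "L = {#a#}" using size_1_singleton_mset by blast
      then show ?thesis using L by (simp add: alone_def)
    next
      case False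
      then have "size L = 2" using sz[OF L(1)] by simp
      then obtain a b where ab: "L = {#a, b#}" using size2_dbl by blast
      then have "prd a \<and> prd b" using prd_both L by blast
      then show ?thesis using L ab by auto
    qed
  qed
  define rep where "rep y = (SOME i. {#i#} \<in> \<pi> y)" for y
  have rep: "{#rep y#} \<in> \<pi> y \<and> rep y < n" if py: "prd y" for y
  proof -
    obtain a where a: "a \<in> \<pi> y" using g by (auto simp: good_def)
    then obtain i where "a = {#i#}" using prdV[OF py] by (auto simp: V1_def)
    then have "\<exists>i. {#i#} \<in> \<pi> y" using a by blast
    then have "{#rep y#} \<in> \<pi> y" unfolding rep_def by (rule someI_ex)
    moreover then have "rep y < n" using prdV[OF py] by (auto simp: V1_def)
    ultimately show ?thesis by blast
  qed
  have adj: "{#rep y, rep z#} \<in> Eset n" if "{#y, z#} \<in> poly l" for y z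
  proof -
    have "prd y" "prd z" using prd_both[OF that] by auto
    then have "{#rep y#} + {#rep z#} \<in> Eset n" using pair[OF that] rep by blast
    then show ?thesis by (simp add: add_mset_commute)
  qed
  show ?thesis
  proof
    fix M assume M: "M \<in> poly r"
    have WN: "set_mset M \<subseteq> {..<N}" using poly_vars[OF M] vr by blast
    have "card (rep ` set_mset M) \<le> card (set_mset M)" by (rule card_image_le) simp
    also have "\<dots> \<le> card {..<N}" using WN by (intro card_mono) auto
    also have "\<dots> < card {..<n}" using Nn by simp
    finally have lt: "card (rep ` set_mset M) < card {..<n}" .
    have "\<not> {..<n} \<subseteq> rep ` set_mset M"
    proof
      assume "{..<n} \<subseteq> rep ` set_mset M"
      then have "card {..<n} \<le> card (rep ` set_mset M)" by (intro card_mono) auto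
      then show False using lt by simp
    qed
    then obtain j where j: "j < n" "j \<notin> rep ` set_mset M" by blast
    define col where "col y = even ((rep y + n - j) mod n)" for y
    have colp: "col y \<noteq> col z" if yz: "{#y, z#} \<in> poly l" "y \<in># M" "z \<in># M" for y z
    proof -
      have "prd y" "prd z" using prd_both[OF yz(1)] by auto
      have ry: "rep y \<noteq> j" "rep y < n" using j yz(2) rep[OF \<open>prd y\<close>] by auto
      have rz: "rep z \<noteq> j" "rep z < n" using j yz(3) rep[OF \<open>prd z\<close>] by auto
      obtain k where k: "k < n" "{#rep y, rep z#} = {#k, Suc k mod n#}"
        using adj[OF yz(1)] by (auto simp: Eset_def)
      then have "(rep y = k \<and> rep z = Suc k mod n) \<or> (rep y = Suc k mod n \<and> rep z = k)"
        by (simp add: dbl_eq)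
      then show ?thesis
      proof
        assume h: "rep y = k \<and> rep z = Suc k mod n"
        show ?thesis using par_flip[of k n j] h ry rz j(1) k(1) by (simp add: col_def)
      next
        assume h: "rep y = Suc k mod n \<and> rep z = k"
        show ?thesis using par_flip[of k n j] h ry rz j(1) k(1) by (simp add: col_def)
      qed
    qed
    define \<psi> where "\<psi> c = (\<lambda>z. if z \<in># M then (if alone z then E3 else if col z = c then E3 else E4) else E2)"
      for c :: bool
    have l23: "mv (\<psi> c) ` poly l \<subseteq> {E2, E3}" for c
    proof
      fix v assume "v \<in> mv (\<psi> c) ` poly l"
      then obtain L where L: "L \<in> poly l" "v = mv (\<psi> c) L" by auto
      show "v \<in> {E2, E3}"
      proof (cases "\<exists>z\<in>#L. z \<notin># M")
        case True
        then obtain z where "z \<in># L" "z \<notin># M" by blast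
        then have "mv (\<psi> c) L = E2" by (intro mv_E2[of z]) (auto simp: \<psi>_def)
        then show ?thesis using L by simp
      next
        case False
        show ?thesis
        proof (cases "size L = 1")
          case True
          then obtain y where y: "L = {#y#}" using size_1_singleton_mset by blast
          then have "alone y" "y \<in># M" using L False by (auto simp: alone_def)
          then show ?thesis using L y by (simp add: \<psi>_def)
        next
          case False2: False
          then have "size L = 2" using sz[OF L(1)] by simp
          then obtain y z where yz: "L = {#y, z#}" using size2_dbl by blast
          have inM: "y \<in># M" "z \<in># M" using False yz by auto
          have "prd y" "prd z" using prd_both L yz by blast+
          then have "\<not> alone y" "\<not> alone z" using excl by blast+
          moreover have "col y \<noteq> col z" using colp L yz inM by blast
          ultimately have "mv (\<psi> c) L = E3" using yz inM by (cases "col y = c") (auto simp: \<psi>_def)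
          then show ?thesis using L by simp
        qed
      qed
    qed
    have Mc: "mv (\<psi> c) M = E3" for c
    proof -
      have "\<forall>z\<in>#M. \<psi> c z \<noteq> E2" by (auto simp: \<psi>_def)
      then have ne2: "mv (\<psi> c) M \<noteq> E2" by (rule mv_not2)
      have inr: "mv (\<psi> c) M \<in> mv (\<psi> c) ` poly r" using M by blast
      have "SS (mv (\<psi> c) ` poly r) = E2 \<or> SS (mv (\<psi> c) ` poly r) = E3"
        using SS_23[OF l23[of c]] EQ[of "\<psi> c"] by simp
      moreover have "SS (mv (\<psi> c) ` poly r) \<noteq> E2"
      proof
        assume "SS (mv (\<psi> c) ` poly r) = E2"
        then have "mv (\<psi> c) ` poly r \<subseteq> {E2}" by (simp only: SS_E2)
        then show False using inr ne2 by blast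
      qed
      ultimately have "SS (mv (\<psi> c) ` poly r) = E3" by simp
      then show ?thesis using SS_E3 inr ne2 by blast
    qed
    have F: "size {#z \<in># M. \<psi> c z = E3#} = 1" for c
    proof -
      have "\<forall>z\<in>#M. \<psi> c z = E3 \<or> \<psi> c z = E4" by (auto simp: \<psi>_def)
      from mv_34[OF this] Mc[of c]
      have "(if size {#z \<in># M. \<psi> c z = E3#} = 0 then E4
              else if size {#z \<in># M. \<psi> c z = E3#} = 1 then E3 else E1) = E3" by simp
      then show ?thesis by (simp split: if_splits)
    qed
    have G: "{#z \<in># M. \<psi> c z = E3#} = {#z \<in># M. alone z \<or> col z = c#}" for c
      by (rule filter_mset_cong) (auto simp: \<psi>_def)
    show "M \<in> poly l"
    proof (cases "\<exists>y\<in>#M. alone y")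
      case True
      then obtain y where y: "y \<in># M" "alone y" by blast
      have Gy: "{#z \<in># M. alone z \<or> col z = c#} = {#y#}" for c
      proof -
        have s1: "size {#z \<in># M. alone z \<or> col z = c#} = 1" using F[of c] G[of c] by simp
        then obtain a where a: "{#z \<in># M. alone z \<or> col z = c#} = {#a#}"
          using size_1_singleton_mset by blast
        have "y \<in># {#z \<in># M. alone z \<or> col z = c#}" using y by simp
        then show ?thesis using a by simp
      qed
      have "M = {#y#}"
      proof (rule multiset_eqI)
        fix z
        have "count {#x \<in># M. alone x \<or> col x = col z#} z = count M z" by simp
        then show "count M z = count {#y#} z" using Gy[of "col z"] by simp
      qed
      then show ?thesis using y by (simp add: alone_def)
    next
      case False
      have H: "{#z \<in># M. col z = c#} = {#z \<in># M. alone z \<or> col z = c#}" for c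
        by (rule filter_mset_cong0) (use False in auto)
      have sT: "size {#x \<in># M. col x#} = 1" using F[of True] G[of True] H[of True] by simp
      have sF: "size {#x \<in># M. \<not> col x#} = 1" using F[of False] G[of False] H[of False] by simp
      obtain z where z: "{#x \<in># M. col x#} = {#z#}" using sT size_1_singleton_mset by blast
      obtain y where y: "{#x \<in># M. \<not> col x#} = {#y#}" using sF size_1_singleton_mset by blast
      have MM: "M = {#z#} + {#y#}" using multiset_partition[of M col] z y by simp
      have zM: "z \<in># {#x \<in># M. col x#}" using z by simp
      have yM: "y \<in># {#x \<in># M. \<not> col x#}" using y by simp
      have cz: "col z" "z \<in># M" using zM by auto
      have cy: "\<not> col y" "y \<in># M" using yM by auto
      have setM: "set_mset M = {z, y}" using MM by auto
      show ?thesis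
      proof (rule ccontr)
        assume notin: "M \<notin> poly l"
        define \<psi>' where "\<psi>' = (\<lambda>x. if x \<in># M then E4 else E2)"
        have "mv \<psi>' M = E4" by (rule mv_E4) (simp add: \<psi>'_def)
        then have inr: "E4 \<in> mv \<psi>' ` poly r" using M by force
        have r2: "SS (mv \<psi>' ` poly r) \<noteq> E2"
        proof
          assume "SS (mv \<psi>' ` poly r) = E2"
          then have "mv \<psi>' ` poly r \<subseteq> {E2}" by (simp only: SS_E2)
          then show False using inr by blast
        qed
        have "mv \<psi>' ` poly l \<subseteq> {E2}"
        proof
          fix v assume "v \<in> mv \<psi>' ` poly l"
          then obtain L where L: "L \<in> poly l" "v = mv \<psi>' L" by auto
          show "v \<in> {E2}"
          proof (cases "\<exists>x\<in>#L. x \<notin># M")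
            case True
            then obtain x where "x \<in># L" "x \<notin># M" by blast
            then have "mv \<psi>' L = E2" by (intro mv_E2[of x]) (auto simp: \<psi>'_def)
            then show ?thesis using L by simp
          next
            case inM: False
            show ?thesis
            proof (cases "size L = 1")
              case True
              then obtain a where a: "L = {#a#}" using size_1_singleton_mset by blast
              then have "alone a" "a \<in># M" using L inM by (auto simp: alone_def)
              then show ?thesis using False by blast
            next
              case False2: False
              then have "size L = 2" using sz[OF L(1)] by simp
              then obtain a b where ab: "L = {#a, b#}" using size2_dbl by blast
              have "a \<noteq> b" using nodiag L ab by blast
              moreover have "a \<in> {z, y}" "b \<in> {z, y}" using inM ab setM by auto
              ultimately have "L = {#z, y#} \<or> L = {#y, z#}" using ab by auto
              then have "L = M" using MM by (auto simp: add_mset_commute)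
              then show ?thesis using notin L by simp
            qed
          qed
        qed
        then have "SS (mv \<psi>' ` poly l) = E2" by (simp only: SS_E2)
        then show False using r2 EQ[of \<psi>'] by simp
      qed
    qed
  qed
qed

end

lemma satisfies_sym: "satisfies pl tm (l, r) \<Longrightarrow> satisfies pl tm (r, l)"
  by (simp add: satisfies_def)

lemma Pol_sub: "poly r \<subseteq> poly l \<Longrightarrow> Pol r \<pi> \<subseteq> Pol l \<pi>"
  by (auto simp: Pol_Mon)

lemma inv_half:
  assumes sat: "satisfies s4_add s4_mul (l, r)"
    and vl: "vars l \<subseteq> {..<N}" and vr: "vars r \<subseteq> {..<N}" and Nn: "N < n" and n2: "2 \<le> n"
    and g: "good \<pi>" and S: "bet n (Pol l \<pi>) \<noteq> None"
  shows "Pol r \<pi> = Pol l \<pi>"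
proof -
  have sat': "satisfies s4_add s4_mul (r, l)" using sat by (rule satisfies_sym)
  have c: "Pol l \<pi> \<subseteq> Eset n \<or> Pol l \<pi> \<subseteq> V1 n" using S by (auto simp: bet_def split: if_splits)
  then show ?thesis
  proof
    assume E: "Pol l \<pi> \<subseteq> Eset n"
    have rl: "poly r \<subseteq> poly l" using key_E[OF sat vr Nn n2 g E] .
    then have "Pol r \<pi> \<subseteq> Eset n" using E Pol_sub by blast
    then have "poly l \<subseteq> poly r" using key_E[OF sat' vl Nn n2 g] by blast
    then show ?thesis using rl by (simp add: Pol_Mon)
  next
    assume E: "Pol l \<pi> \<subseteq> V1 n"
    have rl: "poly r \<subseteq> poly l" using key_V1[OF sat vr Nn n2 g E] .
    then have "Pol r \<pi> \<subseteq> V1 n" using E Pol_sub by blast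
    then have "poly l \<subseteq> poly r" using key_V1[OF sat' vl Nn n2 g] by blast
    then show ?thesis using rl by (simp add: Pol_Mon)
  qed
qed

lemma inv:
  assumes sat: "satisfies s4_add s4_mul (l, r)"
    and vl: "vars l \<subseteq> {..<N}" and vr: "vars r \<subseteq> {..<N}" and Nn: "N < n" and n2: "2 \<le> n"
    and g: "good \<pi>"
  shows "bet n (Pol l \<pi>) = bet n (Pol r \<pi>)"
proof (cases "bet n (Pol l \<pi>) = None")
  case False
  then show ?thesis using inv_half[OF sat vl vr Nn n2 g] by simp
next
  case True
  show ?thesis
  proof (cases "bet n (Pol r \<pi>) = None")
    case False
    then have "Pol l \<pi> = Pol r \<pi>" using inv_half[OF satisfies_sym[OF sat] vr vl Nn n2 g] by simp
    then show ?thesis by simp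
  qed (use True in simp)
qed

fun sumL :: "trm list \<Rightarrow> trm" where
  "sumL [] = Var 0"
| "sumL [t] = t"
| "sumL (t # u # ts) = Plus t (sumL (u # ts))"

fun prodL :: "trm list \<Rightarrow> trm" where
  "prodL [] = Var 0"
| "prodL [t] = t"
| "prodL (t # u # ts) = Times t (prodL (u # ts))"

lemma poly_sumL: "ts \<noteq> [] \<Longrightarrow> poly (sumL ts) = (\<Union>t\<in>set ts. poly t)"
  by (induction ts rule: sumL.induct) auto

lemma vars_sumL: "ts \<noteq> [] \<Longrightarrow> vars (sumL ts) = (\<Union>t\<in>set ts. vars t)"
  by (induction ts rule: sumL.induct) auto

lemma poly_prodL: "xs \<noteq> [] \<Longrightarrow> poly (prodL (map Var xs)) = {mset xs}"
proof (induction xs)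
  case Nil then show ?case by simp
next
  case (Cons x xs)
  show ?case
  proof (cases xs)
    case Nil then show ?thesis by simp
  next
    case (Cons y ys)
    then have "poly (prodL (map Var (x # xs))) = pmul {{#x#}} {mset xs}"
      using Cons.IH by simp
    then show ?thesis by (simp add: pmul_def)
  qed
qed

lemma vars_prodL: "xs \<noteq> [] \<Longrightarrow> vars (prodL (map Var xs)) = set xs"
proof (induction xs)
  case Nil then show ?case by simp
next
  case (Cons x xs)
  then show ?case by (cases xs) auto
qed

definition Cyc :: "nat \<Rightarrow> trm" where
  "Cyc n = sumL (map (\<lambda>i. Times (Var i) (Var (Suc i mod n))) [0..<n])"

definition Xn :: "nat \<Rightarrow> trm" where
  "Xn n = prodL (map Var [0..<n])"

lemma poly_edge: "poly (Times (Var i) (Var j)) = {{#i, j#}}"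
  by (simp add: pmul_def add_mset_commute)

lemma poly_Cyc:
  assumes n0: "0 < n" shows "poly (Cyc n) = Eset n"
proof -
  have ne: "map (\<lambda>i. Times (Var i) (Var (Suc i mod n))) [0..<n] \<noteq> []" using n0 by simp
  have "poly (Cyc n) = (\<Union>i\<in>{0..<n}. poly (Times (Var i) (Var (Suc i mod n))))"
    unfolding Cyc_def poly_sumL[OF ne] by simp
  also have "\<dots> = (\<Union>i\<in>{0..<n}. {{#i, Suc i mod n#}})" by (simp only: poly_edge)
  also have "\<dots> = Eset n" by (auto simp: Eset_def)
  finally show ?thesis .
qed

lemma vars_Cyc: "0 < n \<Longrightarrow> vars (Cyc n) \<subseteq> {..<n}"
  unfolding Cyc_def by (subst vars_sumL) auto

lemma poly_Xn: "0 < n \<Longrightarrow> poly (Xn n) = {mset [0..<n]}"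
  unfolding Xn_def by (rule poly_prodL) simp

lemma vars_Xn: "0 < n \<Longrightarrow> vars (Xn n) \<subseteq> {..<n}"
  unfolding Xn_def by (subst vars_prodL) auto

lemma Pol_agree: "(\<forall>i\<in>vars t. \<pi> i = \<pi>' i) \<Longrightarrow> Pol t \<pi> = Pol t \<pi>'"
  by (induction t) auto

lemma SS_E4: "SS A = E4 \<Longrightarrow> v \<in> A \<Longrightarrow> v = E2 \<or> v = E4"
  unfolding SS_def by (cases v) (auto split: if_splits)

lemma SS_single: "SS {x} = x"
  by (cases x) (auto simp: SS_def)

lemma mul_E4: "a * b = E4 \<Longrightarrow> a = E4 \<and> b = E4"
  by (cases a; cases b) (auto simp: times_s4_def)

lemma mul_E3: "a * b = E3 \<Longrightarrow> (a = E3 \<and> b = E4) \<or> (a = E4 \<and> b = E3)"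
  by (cases a; cases b) (auto simp: times_s4_def)

lemma cyc_valid:
  assumes odd: "odd n" and n3: "3 \<le> n"
  shows "satisfies s4_add s4_mul (Cyc n, Plus (Cyc n) (Xn n))"
  unfolding satisfies_def
proof (intro allI)
  fix \<psi> :: "nat \<Rightarrow> s4"
  have n0: "0 < n" using n3 by simp
  define x where "x = SS (mv \<psi> ` Eset n)"
  define y where "y = mv \<psi> (mset [0..<n])"
  have ex: "eval s4_add s4_mul \<psi> (Cyc n) = x" by (simp add: eval_SS poly_Cyc[OF n0] x_def)
  have ey: "eval s4_add s4_mul \<psi> (Xn n) = y" by (simp add: eval_SS poly_Xn[OF n0] y_def SS_single)
  have edge: "mv \<psi> {#i, Suc i mod n#} = \<psi> i * \<psi> (Suc i mod n)" for i
    by (simp add: mult.commute)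
  have "s4_add x y = x"
  proof (cases "\<exists>i<n. \<psi> i = E2")
    case True
    then obtain i where "i < n" "\<psi> i = E2" by blast
    then have "y = E2" unfolding y_def by (intro mv_E2[of i]) auto
    then show ?thesis by (cases x) auto
  next
    case False
    have ne: "mv \<psi> m \<noteq> E2" if mE: "m \<in> Eset n" for m
    proof -
      obtain i where i: "i < n" "m = {#i, Suc i mod n#}" using mE by (auto simp: Eset_def)
      have "\<forall>z\<in>#m. \<psi> z \<noteq> E2" using i False n0 by auto
      then show ?thesis by (rule mv_not2)
    qed
    have xn2: "x \<noteq> E2"
    proof
      assume "x = E2"
      then have "mv \<psi> ` Eset n \<subseteq> {E2}" unfolding x_def by (simp only: SS_E2)
      moreover have "{#0, Suc 0 mod n#} \<in> Eset n" unfolding Eset_def using n0 by (intro imageI) simp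
      ultimately show False using ne by blast
    qed
    show ?thesis
    proof (cases x)
      case E1 then show ?thesis by (cases y) auto
    next
      case E2 then show ?thesis using xn2 by simp
    next
      case E4
      have all4: "\<psi> i = E4" if "i < n" for i
      proof -
        have m: "{#i, Suc i mod n#} \<in> Eset n" unfolding Eset_def using that by (intro imageI) simp
        have "mv \<psi> {#i, Suc i mod n#} \<in> mv \<psi> ` Eset n" using m by blast
        moreover have "SS (mv \<psi> ` Eset n) = E4" using E4 x_def by simp
        ultimately have "mv \<psi> {#i, Suc i mod n#} = E2 \<or> mv \<psi> {#i, Suc i mod n#} = E4"
          using SS_E4 by blast
        then have "mv \<psi> {#i, Suc i mod n#} = E4" using ne[OF m] by simp
        then have "\<psi> i * \<psi> (Suc i mod n) = E4" using edge by simp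
        then show ?thesis using mul_E4 by blast
      qed
      then have "y = E4" unfolding y_def by (intro mv_E4) auto
      then show ?thesis using E4 by simp
    next
      case E3
      define P where "P i \<longleftrightarrow> \<psi> i = E3" for i
      have step: "P (Suc i mod n) \<longleftrightarrow> \<not> P i" if "i < n" for i
      proof -
        have m: "{#i, Suc i mod n#} \<in> Eset n" unfolding Eset_def using that by (intro imageI) simp
        have "mv \<psi> {#i, Suc i mod n#} \<in> mv \<psi> ` Eset n" using m by blast
        moreover have "SS (mv \<psi> ` Eset n) = E3" using E3 x_def by simp
        ultimately have "mv \<psi> {#i, Suc i mod n#} = E2 \<or> mv \<psi> {#i, Suc i mod n#} = E3"
          using SS_E3 by blast
        then have "mv \<psi> {#i, Suc i mod n#} = E3" using ne[OF m] by simp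
        then have "\<psi> i * \<psi> (Suc i mod n) = E3" using edge by simp
        then have "(\<psi> i = E3 \<and> \<psi> (Suc i mod n) = E4) \<or> (\<psi> i = E4 \<and> \<psi> (Suc i mod n) = E3)"
          by (rule mul_E3)
        then show ?thesis unfolding P_def by auto
      qed
      have par: "P i \<longleftrightarrow> (P 0 \<longleftrightarrow> even i)" if "i < n" for i
        using that
      proof (induction i)
        case 0 then show ?case by simp
      next
        case (Suc i)
        then have sm: "Suc i mod n = Suc i" by simp
        have "i < n" using Suc.prems by simp
        have ih: "P i \<longleftrightarrow> (P 0 \<longleftrightarrow> even i)" using Suc.IH[OF \<open>i < n\<close>] .
        have "P (Suc i) \<longleftrightarrow> \<not> P i" using step[OF \<open>i < n\<close>] sm by simp
        then show ?case using ih by simp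
      qed
      have lt: "n - 1 < n" "even (n - 1)" using n0 odd by auto
      have a: "P (n - 1) \<longleftrightarrow> P 0" using par[OF lt(1)] lt(2) by simp
      have "Suc (n - 1) mod n = 0" using n0 by simp
      then have "P 0 \<longleftrightarrow> \<not> P (n - 1)" using step[of "n - 1"] n0 by simp
      then show ?thesis using a by simp
    qed
  qed
  then show "eval s4_add s4_mul \<psi> (fst (Cyc n, Plus (Cyc n) (Xn n))) =
             eval s4_add s4_mul \<psi> (snd (Cyc n, Plus (Cyc n) (Xn n)))"
    using ex ey by simp
qed

lemma not_Eset_00: "2 \<le> n \<Longrightarrow> {#0, 0#} \<notin> Eset n"
proof
  assume n2: "2 \<le> n" and "{#0, 0#} \<in> Eset n"
  then obtain k where k: "k < n" "{#0, 0#} = {#k, Suc k mod n#}" by (auto simp: Eset_def)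
  then have "k = 0" "Suc k mod n = 0" by (auto simp: dbl_eq)
  then show False using n2 by simp
qed

lemma bet_junk: "2 \<le> n \<Longrightarrow> bet n {{#0, 0#}} = None"
  using not_Eset_00 V1_size by (fastforce simp: bet_def)

theorem proposition2p1:
  shows "\<not> finitely_based s4_add s4_mul"
proof
  assume "finitely_based s4_add s4_mul"
  then obtain \<Sigma> where fin: "finite \<Sigma>" and sub: "\<Sigma> \<subseteq> identities s4_add s4_mul"
    and der: "\<forall>e\<in>identities s4_add s4_mul. derives \<Sigma> (fst e) (snd e)"
    unfolding finitely_based_def by blast
  have "finite (\<Union>e\<in>\<Sigma>. vars (fst e) \<union> vars (snd e))" using fin finite_vars by blast
  then obtain N where N0: "\<forall>x\<in>(\<Union>e\<in>\<Sigma>. vars (fst e) \<union> vars (snd e)). x < N"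
    unfolding finite_nat_set_iff_bounded by blast
  then have N: "(\<Union>e\<in>\<Sigma>. vars (fst e) \<union> vars (snd e)) \<subseteq> {..<N}" by blast
  define n where "n = 2 * N + 3"
  have oddn: "odd n" and n3: "3 \<le> n" and Nn: "N < n" and n2: "2 \<le> n" and n0: "0 < n"
    by (auto simp: n_def)
  have "(Cyc n, Plus (Cyc n) (Xn n)) \<in> identities s4_add s4_mul"
    using cyc_valid[OF oddn n3] by (simp add: identities_def)
  then have d: "derives \<Sigma> (Cyc n) (Plus (Cyc n) (Xn n))" using der by force
  have ax: "\<forall>e\<in>\<Sigma>. \<forall>\<phi>. (\<forall>i. \<phi> i \<in> DD n) \<longrightarrow>
      eval (plB n) (tmB n) \<phi> (fst e) = eval (plB n) (tmB n) \<phi> (snd e)"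
  proof (intro ballI allI impI)
    fix e and \<phi> :: "nat \<Rightarrow> nat multiset set option" assume e: "e \<in> \<Sigma>" and \<phi>: "\<forall>i. \<phi> i \<in> DD n"
    obtain l r where lr: "e = (l, r)" by (cases e)
    have sat: "satisfies s4_add s4_mul (l, r)" using sub e lr by (auto simp: identities_def)
    have "vars (fst e) \<union> vars (snd e) \<subseteq> {..<N}" using N e by blast
    then have vl: "vars l \<subseteq> {..<N}" and vr: "vars r \<subseteq> {..<N}" using lr by auto
    define \<pi> where "\<pi> i = (case \<phi> i of Some P \<Rightarrow> P | None \<Rightarrow> {{#0, 0#}})" for i
    have g: "good \<pi>"
      unfolding good_def
    proof
      fix i
      show "\<pi> i \<noteq> {} \<and> (\<forall>m\<in>\<pi> i. m \<noteq> {#})"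
      proof (cases "\<phi> i")
        case None then show ?thesis by (simp add: \<pi>_def)
      next
        case (Some P)
        have "\<phi> i \<in> DD n" using \<phi> by blast
        then have "P \<noteq> {}" "P \<subseteq> Eset n \<or> P \<subseteq> V1 n" using Some by (auto simp: DD_def)
        then have PE: "P \<noteq> {}" "P \<subseteq> Eset n \<or> P \<subseteq> V1 n" by blast+
        have pi: "\<pi> i = P" using Some by (simp add: \<pi>_def)
        have "\<forall>m\<in>P. m \<noteq> {#}"
        proof
          fix m assume "m \<in> P"
          then have "size m = 2 \<or> size m = 1" using PE(2) Eset_size V1_size by blast
          then show "m \<noteq> {#}" by auto
        qed
        then show ?thesis using pi PE(1) by simp
      qed
    qed
    have phi: "\<phi> = (\<lambda>i. bet n (\<pi> i))"
    proof
      fix i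
      show "\<phi> i = bet n (\<pi> i)"
      proof (cases "\<phi> i")
        case None then show ?thesis using bet_junk[OF n2] by (simp add: \<pi>_def)
      next
        case (Some P)
        have "\<phi> i \<in> DD n" using \<phi> by blast
        then have "P \<subseteq> Eset n \<or> P \<subseteq> V1 n" using Some by (auto simp: DD_def)
        then show ?thesis using Some by (simp add: \<pi>_def bet_def)
      qed
    qed
    show "eval (plB n) (tmB n) \<phi> (fst e) = eval (plB n) (tmB n) \<phi> (snd e)"
      unfolding phi lr eval_B[OF g] using inv[OF sat vl vr Nn n2 g] by simp
  qed
  have sound: "\<forall>\<phi>. (\<forall>i. \<phi> i \<in> DD n) \<longrightarrow>
      eval (plB n) (tmB n) \<phi> (Cyc n) = eval (plB n) (tmB n) \<phi> (Plus (Cyc n) (Xn n))"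
    using derives_sound[OF d DD_closed ax] .
  define \<pi>0 where "\<pi>0 i = (if i < n then {{#i#}} else {{#0, 0#}})" for i
  have g0: "good \<pi>0" by (auto simp: good_def \<pi>0_def)
  define \<phi>0 where "\<phi>0 i = bet n (\<pi>0 i)" for i
  have \<phi>0D: "\<forall>i. \<phi>0 i \<in> DD n"
  proof
    fix i show "\<phi>0 i \<in> DD n" unfolding \<phi>0_def by (rule bet_DD) (simp add: \<pi>0_def)
  qed
  have PC: "Pol (Cyc n) \<pi>0 = Eset n"
  proof -
    have "Pol (Cyc n) \<pi>0 = Pol (Cyc n) (\<lambda>i. {{#i#}})"
      using vars_Cyc[OF n0] by (intro Pol_agree) (auto simp: \<pi>0_def)
    then show ?thesis using poly_Cyc[OF n0] by (simp add: poly_def)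
  qed
  have PX: "Pol (Xn n) \<pi>0 = {mset [0..<n]}"
  proof -
    have "Pol (Xn n) \<pi>0 = Pol (Xn n) (\<lambda>i. {{#i#}})"
      using vars_Xn[OF n0] by (intro Pol_agree) (auto simp: \<pi>0_def)
    then show ?thesis using poly_Xn[OF n0] by (simp add: poly_def)
  qed
  have A: "eval (plB n) (tmB n) \<phi>0 (Cyc n) = Some (Eset n)"
    unfolding \<phi>0_def eval_B[OF g0] PC by (simp add: bet_def)
  have B: "eval (plB n) (tmB n) \<phi>0 (Plus (Cyc n) (Xn n)) = None"
  proof -
    have sz: "size (mset [0..<n]) = n" by simp
    have "mset [0..<n] \<notin> Eset n" using Eset_size n3 sz by fastforce
    moreover have "mset [0..<n] \<notin> V1 n" using V1_size n3 sz by fastforce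
    ultimately have "bet n (Eset n \<union> {mset [0..<n]}) = None" by (auto simp: bet_def)
    then show ?thesis unfolding \<phi>0_def eval_B[OF g0] by (simp add: PC PX)
  qed
  have C: "eval (plB n) (tmB n) \<phi>0 (Cyc n) = eval (plB n) (tmB n) \<phi>0 (Plus (Cyc n) (Xn n))"
    by (rule mp[OF spec[OF sound, of \<phi>0] \<phi>0D])
  from C have "Some (Eset n) = None" unfolding A B .
  then show False by simp
qed

end
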